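(* Let $G$ be a group generated by a finite subset $T \subseteq G$, let $N \lhd G$ be a normal subgroup of finite index, and let $\overline{T}$ be the multiset $\{tN : t \in T\}$ in $G/N$. Then $d_G(N) \leq r(G/N, \overline{T})$.
   Context: For a group $G$ and subsets $S, X \subseteq G$, $\langle S \rangle^X$ denotes the subgroup generated by all conjugates $xsx^{-1}$ with $s \in S$, $x \in X$. For $N \lhd G$, $d_G(N)$ is the least cardinality of a subset $S \subseteq N$ with $\langle S \rangle^G = N$. For a finite group $K$ and a generating multiset $T = \{t_1, \dots, t_d\}$ of $K$, let $F$ be the free group on $x_1, \dots, x_d$ and $\varphi : F \to K$ the surjection with $\varphi(x_i) = t_i$; then $r(K,T) = d_F(\mathrm{Ker}(\varphi))$. *)

theory Defs
  imports "HOL-Algebra.Algebra" "HOL-Library.Extended_Nat"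
begin

definition normal_closure :: "('a, 'b) monoid_scheme \<Rightarrow> 'a set \<Rightarrow> 'a set" where
  "normal_closure G S =
     generate G {x \<otimes>\<^bsub>G\<^esub> s \<otimes>\<^bsub>G\<^esub> inv\<^bsub>G\<^esub> x | x s. x \<in> carrier G \<and> s \<in> S}"

text \<open>d_G(N): least cardinality of S subset N with normal closure N
  (infinity if no finite such S exists; infinite S never beat a finite one).\<close>
definition normal_rank :: "('a, 'b) monoid_scheme \<Rightarrow> 'a set \<Rightarrow> enat" where
  "normal_rank G N =
     Inf {enat (card S) | S. S \<subseteq> N \<and> finite S \<and> normal_closure G S = N}"

text \<open>Free group on the index set I: reduced words over letters (i, b), where
  (i, True) stands for x_i and (i, False) for x_i^-1.\<close>
definition reduced_word :: "('i \<times> bool) list \<Rightarrow> bool" where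
  "reduced_word ws \<longleftrightarrow>
     (\<forall>k. Suc k < length ws \<longrightarrow>
        \<not> (fst (ws ! k) = fst (ws ! Suc k) \<and> snd (ws ! k) \<noteq> snd (ws ! Suc k)))"

definition free_reduce :: "('i \<times> bool) list \<Rightarrow> ('i \<times> bool) list" where
  "free_reduce ws = foldr (\<lambda>a acc. case acc of [] \<Rightarrow> [a]
        | b # bs \<Rightarrow> (if fst a = fst b \<and> snd a \<noteq> snd b then bs else a # acc)) ws []"

definition free_grp :: "'i set \<Rightarrow> ('i \<times> bool) list monoid" where
  "free_grp I = \<lparr> carrier = {ws. set ws \<subseteq> I \<times> UNIV \<and> reduced_word ws},
                  monoid.mult = (\<lambda>xs ys. free_reduce (xs @ ys)),
                  monoid.one = [] \<rparr>"

definition free_lift :: "('k, 'c) monoid_scheme \<Rightarrow> ('i \<Rightarrow> 'k) \<Rightarrow> ('i \<times> bool) list \<Rightarrow> 'k" where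
  "free_lift K t ws =
     foldr (\<lambda>(i, b) acc. (if b then t i else inv\<^bsub>K\<^esub> (t i)) \<otimes>\<^bsub>K\<^esub> acc) ws \<one>\<^bsub>K\<^esub>"

text \<open>r(K, T) for the generating family (t i)_{i in I} of K, i.e. the multiset {t i | i in I}.\<close>
definition relation_rank :: "('k, 'c) monoid_scheme \<Rightarrow> 'i set \<Rightarrow> ('i \<Rightarrow> 'k) \<Rightarrow> enat" where
  "relation_rank K I t = normal_rank (free_grp I) (kernel (free_grp I) K (free_lift K t))"

end

theory Submission
  imports Defs
begin

definition st :: "('i \<times> bool) \<Rightarrow> ('i \<times> bool) list \<Rightarrow> ('i \<times> bool) list" where
  "st a acc = (case acc of [] \<Rightarrow> [a]
        | b # bs \<Rightarrow> (if fst a = fst b \<and> snd a \<noteq> snd b then bs else a # acc))"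

lemma fr_eq: "free_reduce ws = foldr st ws []"
  unfolding free_reduce_def st_def by (rule refl)

fun red :: "('i \<times> bool) list \<Rightarrow> bool" where
  "red [] = True"
| "red [a] = True"
| "red (a # b # ws) = (\<not> (fst a = fst b \<and> snd a \<noteq> snd b) \<and> red (b # ws))"

lemma reduced_word_red: "reduced_word ws = red ws"
proof (induction ws rule: red.induct)
  case 1 then show ?case by (simp add: reduced_word_def)
next
  case (2 a) then show ?case by (simp add: reduced_word_def)
next
  case (3 a b ws)
  have "reduced_word (a # b # ws) \<longleftrightarrow>
     \<not> (fst a = fst b \<and> snd a \<noteq> snd b) \<and> reduced_word (b # ws)"
  proof -
    have A: "(\<forall>k. Q k) = (Q 0 \<and> (\<forall>k. Q (Suc k)))" for Q :: "nat \<Rightarrow> bool"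
      by (metis not0_implies_Suc)
    show ?thesis unfolding reduced_word_def by (subst A) simp
  qed
  then show ?case using 3 by simp
qed

lemma red_tl: "red (a # ws) \<Longrightarrow> red ws"
  by (cases ws) auto

lemma st_red: "red r \<Longrightarrow> red (st a r)"
  by (cases r rule: red.cases) (auto simp: st_def)

lemma foldr_st_red: "red r \<Longrightarrow> red (foldr st c r)"
  by (induction c) (auto intro: st_red)

lemma fr_red: "red (free_reduce ws)"
  unfolding fr_eq by (rule foldr_st_red) simp

definition flip :: "('i \<times> bool) \<Rightarrow> ('i \<times> bool)" where "flip a = (fst a, \<not> snd a)"

lemma st_inv: "red r \<Longrightarrow> st (flip a) (st a r) = r"
proof (cases r rule: red.cases)
  case (3 c d ws)
  assume "red r"
  then show ?thesis using 3 by (auto simp: st_def flip_def prod_eq_iff)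
qed (auto simp: st_def flip_def prod_eq_iff)

lemma st_flip_cons: "st (flip b) (b # x) = x"
  by (simp add: st_def flip_def)

lemma fr_id: "red w \<Longrightarrow> free_reduce w = w"
proof (induction w)
  case (Cons a w)
  then have "red w" using red_tl by blast
  with Cons have "free_reduce w = w" by simp
  then show ?case using Cons.prems
    by (cases w) (auto simp: fr_eq st_def)
qed (simp add: fr_eq)

lemma fr_append: "free_reduce (xs @ ys) = foldr st xs (free_reduce ys)"
  by (simp add: fr_eq)

lemma foldr_st_step: "red w \<Longrightarrow> red r \<Longrightarrow> foldr st (st a w) r = st a (foldr st w r)"
proof (cases w)
  case (Cons b bs)
  assume w: "red w" and r: "red r"
  show ?thesis
  proof (cases "fst a = fst b \<and> snd a \<noteq> snd b")
    case True
    then have "a = flip b" by (auto simp: flip_def prod_eq_iff)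
    moreover have "red (foldr st bs r)" using r by (rule foldr_st_red)
    ultimately have "st a (foldr st w r) = foldr st bs r"
      using Cons st_inv[of "foldr st bs r" b] by simp
    moreover have "st a w = bs" using True Cons by (simp add: st_def)
    ultimately show ?thesis by simp
  next
    case False
    then have "st a w = a # w" using Cons by (simp add: st_def)
    then show ?thesis by simp
  qed
qed (simp add: st_def)

lemma action: "red r \<Longrightarrow> foldr st (free_reduce c) r = foldr st c r"
proof (induction c)
  case Nil then show ?case by (simp add: fr_eq)
next
  case (Cons a c)
  have "free_reduce (a # c) = st a (free_reduce c)" by (simp add: fr_eq)
  then have "foldr st (free_reduce (a # c)) r = st a (foldr st (free_reduce c) r)"
    using foldr_st_step[OF fr_red Cons.prems] by simp
  then show ?case using Cons by simp
qed

lemma set_st: "set (st a r) \<subseteq> insert a (set r)"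
  by (cases r) (auto simp: st_def)

lemma set_fr: "set (free_reduce ws) \<subseteq> set ws"
proof (induction ws)
  case (Cons a ws)
  then show ?case using set_st[of a "free_reduce ws"] by (auto simp: fr_eq)
qed (simp add: fr_eq)

lemma fr_assoc: "free_reduce (free_reduce (x @ y) @ z) = free_reduce (x @ free_reduce (y @ z))"
proof -
  have "free_reduce (free_reduce (x @ y) @ z) = foldr st (free_reduce (x @ y)) (free_reduce z)"
    by (rule fr_append)
  also have "\<dots> = foldr st (x @ y) (free_reduce z)"
    by (rule action[OF fr_red])
  finally have "free_reduce (free_reduce (x @ y) @ z) = foldr st (x @ y) (free_reduce z)" .
  moreover have "free_reduce (x @ free_reduce (y @ z)) = foldr st (x @ y) (free_reduce z)"
  proof -
    have "free_reduce (free_reduce (y@z)) = free_reduce (y@z)" by (rule fr_id[OF fr_red])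
    then show ?thesis by (simp only: fr_append foldr_append o_apply)
  qed
  ultimately show ?thesis by simp
qed

lemma inv_word: "red (w @ r) \<Longrightarrow> foldr st (rev (map flip w)) (w @ r) = r"
proof (induction w)
  case (Cons b bs)
  then have "red (bs @ r)" using red_tl by (metis append_Cons)
  then show ?case using Cons by (simp add: st_flip_cons)
qed simp

lemma free_grp_group: "group (free_grp I)"
proof (rule groupI)
  fix x y assume "x \<in> carrier (free_grp I)" "y \<in> carrier (free_grp I)"
  then show "x \<otimes>\<^bsub>free_grp I\<^esub> y \<in> carrier (free_grp I)"
    using set_fr[of "x @ y"] fr_red[of "x @ y"]
    by (auto simp: free_grp_def reduced_word_red)
next
  show "\<one>\<^bsub>free_grp I\<^esub> \<in> carrier (free_grp I)"
    by (simp add: free_grp_def reduced_word_red)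
next
  fix x y z
  show "x \<otimes>\<^bsub>free_grp I\<^esub> y \<otimes>\<^bsub>free_grp I\<^esub> z = x \<otimes>\<^bsub>free_grp I\<^esub> (y \<otimes>\<^bsub>free_grp I\<^esub> z)"
    by (simp add: free_grp_def fr_assoc)
next
  fix x assume "x \<in> carrier (free_grp I)"
  then show "\<one>\<^bsub>free_grp I\<^esub> \<otimes>\<^bsub>free_grp I\<^esub> x = x"
    by (simp add: free_grp_def reduced_word_red fr_id)
next
  fix x assume x: "x \<in> carrier (free_grp I)"
  then have rx: "red x" by (simp add: free_grp_def reduced_word_red)
  let ?y = "free_reduce (rev (map flip x))"
  have "set (rev (map flip x)) \<subseteq> I \<times> UNIV" using x by (auto simp: free_grp_def flip_def)
  then have "?y \<in> carrier (free_grp I)"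
    using set_fr[of "rev (map flip x)"] fr_red[of "rev (map flip x)"]
    by (auto simp: free_grp_def reduced_word_red)
  moreover have "?y \<otimes>\<^bsub>free_grp I\<^esub> x = \<one>\<^bsub>free_grp I\<^esub>"
    using inv_word[of x "[]"] rx
    by (simp add: free_grp_def fr_append action fr_id)
  ultimately show "\<exists>y\<in>carrier (free_grp I). y \<otimes>\<^bsub>free_grp I\<^esub> x = \<one>\<^bsub>free_grp I\<^esub>" by blast
qed


definition ev :: "('k, 'c) monoid_scheme \<Rightarrow> ('i \<Rightarrow> 'k) \<Rightarrow> ('i \<times> bool) \<Rightarrow> 'k" where
  "ev K t a = (if snd a then t (fst a) else inv\<^bsub>K\<^esub> (t (fst a)))"

lemma fl_Nil: "free_lift K t [] = \<one>\<^bsub>K\<^esub>"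
  by (simp add: free_lift_def)

lemma fl_Cons: "free_lift K t (a # w) = ev K t a \<otimes>\<^bsub>K\<^esub> free_lift K t w"
  by (cases a) (simp add: free_lift_def ev_def)

lemma ev_carrier: "group K \<Longrightarrow> t ` I \<subseteq> carrier K \<Longrightarrow> a \<in> I \<times> UNIV \<Longrightarrow> ev K t a \<in> carrier K"
  by (auto simp: ev_def intro: group.inv_closed)

lemma fl_carrier: "group K \<Longrightarrow> t ` I \<subseteq> carrier K \<Longrightarrow> set w \<subseteq> I \<times> UNIV \<Longrightarrow> free_lift K t w \<in> carrier K"
  by (induction w) (auto simp: fl_Nil fl_Cons intro: ev_carrier group.is_monoid monoid.m_closed)

lemma fl_append:
  assumes "group K" "t ` I \<subseteq> carrier K" "set xs \<subseteq> I \<times> UNIV" "set ys \<subseteq> I \<times> UNIV"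
  shows "free_lift K t (xs @ ys) = free_lift K t xs \<otimes>\<^bsub>K\<^esub> free_lift K t ys"
  using assms(3)
proof (induction xs)
  case Nil then show ?case using fl_carrier[OF assms(1,2,4)] assms(1)
    by (simp add: fl_Nil group.is_monoid)
next
  case (Cons a xs)
  then show ?case using fl_carrier[OF assms(1,2,4)] fl_carrier[OF assms(1,2), of xs]
      ev_carrier[OF assms(1,2), of a]
    by (simp add: fl_Cons group.is_monoid monoid.m_assoc[OF group.is_monoid[OF assms(1)]])
qed

lemma fl_st:
  assumes "group K" "t ` I \<subseteq> carrier K" "a \<in> I \<times> UNIV" "set r \<subseteq> I \<times> UNIV"
  shows "free_lift K t (st a r) = free_lift K t (a # r)"
proof (cases r)
  case (Cons b bs)
  show ?thesis
  proof (cases "fst a = fst b \<and> snd a \<noteq> snd b")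
    case True
    have b: "b \<in> I \<times> UNIV" "set bs \<subseteq> I \<times> UNIV" using Cons assms(4) by auto
    have t: "t (fst b) \<in> carrier K" using b assms(2) by auto
    have "ev K t a \<otimes>\<^bsub>K\<^esub> ev K t b = \<one>\<^bsub>K\<^esub>"
      using True t assms(1) by (cases "snd b") (auto simp: ev_def group.l_inv group.r_inv)
    then have "free_lift K t (a # r) = free_lift K t bs"
      using Cons fl_carrier[OF assms(1,2) b(2)] ev_carrier[OF assms(1,2) assms(3)]
        ev_carrier[OF assms(1,2) b(1)] assms(1)
      by (simp add: fl_Cons monoid.m_assoc[OF group.is_monoid[OF assms(1)], symmetric] group.is_monoid)
    then show ?thesis using True Cons by (simp add: st_def)
  next
    case False
    then have "st a r = a # r" using Cons by (simp add: st_def)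
    then show ?thesis by simp
  qed
qed (simp add: st_def)

lemma fl_fr:
  assumes "group K" "t ` I \<subseteq> carrier K" "set w \<subseteq> I \<times> UNIV"
  shows "free_lift K t (free_reduce w) = free_lift K t w"
  using assms(3)
proof (induction w)
  case Nil then show ?case by (simp add: fr_eq)
next
  case (Cons a w)
  have "free_reduce (a # w) = st a (free_reduce w)" by (simp add: fr_eq)
  moreover have "set (free_reduce w) \<subseteq> I \<times> UNIV" using set_fr[of w] Cons by auto
  ultimately show ?case using fl_st[OF assms(1,2)] Cons by (simp add: fl_Cons)
qed

lemma fl_hom:
  assumes "group K" "t ` I \<subseteq> carrier K"
  shows "free_lift K t \<in> hom (free_grp I) K"
  unfolding hom_def
proof (safe)
  fix w assume "w \<in> carrier (free_grp I)"
  then show "free_lift K t w \<in> carrier K"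
    by (intro fl_carrier[OF assms]) (auto simp: free_grp_def)
next
  fix x y assume "x \<in> carrier (free_grp I)" "y \<in> carrier (free_grp I)"
  then show "free_lift K t (x \<otimes>\<^bsub>free_grp I\<^esub> y) = free_lift K t x \<otimes>\<^bsub>K\<^esub> free_lift K t y"
    by (auto simp: free_grp_def fl_fr[OF assms] fl_append[OF assms])
qed

lemma fl_comp:
  assumes "group G" "group K" "h \<in> hom G K" "t ` I \<subseteq> carrier G" "set w \<subseteq> I \<times> UNIV"
  shows "free_lift K (\<lambda>i. h (t i)) w = h (free_lift G t w)"
  using assms(5)
proof (induction w)
  interpret group_hom G K h using assms by (simp add: group_hom_def group_hom_axioms_def)
  case Nil then show ?case by (simp add: fl_Nil)
next
  interpret group_hom G K h using assms by (simp add: group_hom_def group_hom_axioms_def)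
  case (Cons a w)
  have ta: "t (fst a) \<in> carrier G" using Cons assms(4) by auto
  have "ev K (\<lambda>i. h (t i)) a = h (ev G t a)" using ta by (simp add: ev_def)
  then show ?case using Cons fl_carrier[OF assms(1,4), of w] ev_carrier[OF assms(1,4), of a]
    by (simp add: fl_Cons)
qed


lemma surj_lift:
  assumes "group G" "T \<subseteq> carrier G" "generate G T = carrier G"
  shows "free_lift G (\<lambda>x. x) ` carrier (free_grp T) = carrier G"
proof
  show "free_lift G (\<lambda>x. x) ` carrier (free_grp T) \<subseteq> carrier G"
    using fl_hom[OF assms(1), of "\<lambda>x. x" T] assms(2) by (auto simp: hom_def)
next
  interpret F: group "free_grp T" by (rule free_grp_group)
  interpret group_hom "free_grp T" G "free_lift G (\<lambda>x. x)"
    using fl_hom[OF assms(1), of "\<lambda>x. x" T] assms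
    by (simp add: group_hom_def group_hom_axioms_def free_grp_group)
  have "g \<in> free_lift G (\<lambda>x. x) ` carrier (free_grp T)" if "g \<in> generate G T" for g
    using that
  proof (induction rule: generate.induct)
    case one
    have "[] \<in> carrier (free_grp T)" by (simp add: free_grp_def reduced_word_def)
    then show ?case by (force simp: fl_Nil)
  next
    case (incl h)
    have "[(h, True)] \<in> carrier (free_grp T)" using incl by (simp add: free_grp_def reduced_word_def)
    moreover have "free_lift G (\<lambda>x. x) [(h, True)] = h"
      using incl assms by (auto simp: fl_Cons fl_Nil ev_def)
    ultimately show ?case by force
  next
    case (inv h)
    have "[(h, False)] \<in> carrier (free_grp T)" using inv by (simp add: free_grp_def reduced_word_def)
    moreover have "free_lift G (\<lambda>x. x) [(h, False)] = inv\<^bsub>G\<^esub> h"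
      using inv assms by (auto simp: fl_Cons fl_Nil ev_def)
    ultimately show ?case by force
  next
    case (eng h1 h2)
    then obtain w1 w2 where "w1 \<in> carrier (free_grp T)" "w2 \<in> carrier (free_grp T)"
      "h1 = free_lift G (\<lambda>x. x) w1" "h2 = free_lift G (\<lambda>x. x) w2" by blast
    then show ?case by (metis F.m_closed hom_mult image_eqI)
  qed
  then show "carrier G \<subseteq> free_lift G (\<lambda>x. x) ` carrier (free_grp T)" using assms(3) by blast
qed

theorem proposition2p4:
  fixes G :: "('g, 'b) monoid_scheme" and T :: "'g set" and N :: "'g set"
  assumes "group G"
    and "T \<subseteq> carrier G" and "finite T" and "generate G T = carrier G"
    and "N \<lhd> G"
    and "finite (carrier (G Mod N))"
  shows "normal_rank G N \<le> relation_rank (G Mod N) T (\<lambda>t. N #>\<^bsub>G\<^esub> t)"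
proof -
  let ?F = "free_grp T"
  let ?phi = "free_lift G (\<lambda>x. x)"
  let ?psi = "free_lift (G Mod N) (\<lambda>t. N #>\<^bsub>G\<^esub> t)"
  interpret G: group G by (rule assms(1))
  interpret F: group ?F by (rule free_grp_group)
  interpret N: normal N G by (rule assms(5))
  interpret group_hom ?F G ?phi
    using fl_hom[OF assms(1), of "\<lambda>x. x" T] assms
    by (simp add: group_hom_def group_hom_axioms_def free_grp_group)
  have surj: "?phi ` carrier ?F = carrier G" by (rule surj_lift[OF assms(1,2,4)])
  have psi: "?psi w = N #>\<^bsub>G\<^esub> ?phi w" if "w \<in> carrier ?F" for w
    using fl_comp[OF assms(1) N.factorgroup_is_group N.r_coset_hom_Mod, of "\<lambda>x. x" T w] that assms(2)
    by (auto simp: free_grp_def)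
  have K: "kernel ?F (G Mod N) ?psi = {w \<in> carrier ?F. ?phi w \<in> N}"
  proof -
    have E: "N #>\<^bsub>G\<^esub> ?phi w = N \<longleftrightarrow> ?phi w \<in> N" if "w \<in> carrier ?F" for w
      using that G.coset_join1[of N "?phi w"] G.coset_join2[of "?phi w" N] N.subgroup_axioms
      by auto
    show ?thesis unfolding kernel_def one_FactGroup
    proof (rule Collect_cong)
      fix w
      show "(w \<in> carrier ?F \<and> ?psi w = N) = (w \<in> carrier ?F \<and> ?phi w \<in> N)"
        using E[of w] psi[of w] by auto
    qed
  qed
  have phiK: "?phi ` kernel ?F (G Mod N) ?psi = N"
  proof
    show "?phi ` kernel ?F (G Mod N) ?psi \<subseteq> N" using K by auto
    show "N \<subseteq> ?phi ` kernel ?F (G Mod N) ?psi"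
    proof
      fix n assume n: "n \<in> N"
      then have "n \<in> carrier G" using N.subset by blast
      then obtain w where "w \<in> carrier ?F" "n = ?phi w" using surj by blast
      then show "n \<in> ?phi ` kernel ?F (G Mod N) ?psi" using K n by auto
    qed
  qed
  show ?thesis
    unfolding normal_rank_def relation_rank_def
  proof (rule Inf_mono)
    fix b assume "b \<in> {enat (card S) |S. S \<subseteq> kernel ?F (G Mod N) ?psi \<and> finite S \<and>
        normal_closure ?F S = kernel ?F (G Mod N) ?psi}"
    then obtain S where S: "b = enat (card S)" "S \<subseteq> kernel ?F (G Mod N) ?psi" "finite S"
      "normal_closure ?F S = kernel ?F (G Mod N) ?psi" by blast
    have SF: "S \<subseteq> carrier ?F" using S(2) by (auto simp: kernel_def)
    let ?X = "{x \<otimes>\<^bsub>?F\<^esub> s \<otimes>\<^bsub>?F\<^esub> inv\<^bsub>?F\<^esub> x | x s. x \<in> carrier ?F \<and> s \<in> S}"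
    let ?Y = "{x \<otimes>\<^bsub>G\<^esub> s \<otimes>\<^bsub>G\<^esub> inv\<^bsub>G\<^esub> x | x s. x \<in> carrier G \<and> s \<in> ?phi ` S}"
    have XF: "?X \<subseteq> carrier ?F" using SF by auto
    have XY: "?phi ` ?X = ?Y"
    proof
      show "?phi ` ?X \<subseteq> ?Y"
      proof
        fix y assume "y \<in> ?phi ` ?X"
        then obtain x s where "x \<in> carrier ?F" "s \<in> S" "y = ?phi (x \<otimes>\<^bsub>?F\<^esub> s \<otimes>\<^bsub>?F\<^esub> inv\<^bsub>?F\<^esub> x)"
          by blast
        moreover then have "y = ?phi x \<otimes>\<^bsub>G\<^esub> ?phi s \<otimes>\<^bsub>G\<^esub> inv\<^bsub>G\<^esub> ?phi x"
          using SF by auto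
        moreover have "?phi x \<in> carrier G" using calculation by simp
        ultimately show "y \<in> ?Y" by blast
      qed
      show "?Y \<subseteq> ?phi ` ?X"
      proof
        fix y assume "y \<in> ?Y"
        then obtain g s where g: "g \<in> carrier G" "s \<in> S" "y = g \<otimes>\<^bsub>G\<^esub> ?phi s \<otimes>\<^bsub>G\<^esub> inv\<^bsub>G\<^esub> g"
          by blast
        then obtain x where x: "x \<in> carrier ?F" "g = ?phi x" using surj by blast
        then have "y = ?phi (x \<otimes>\<^bsub>?F\<^esub> s \<otimes>\<^bsub>?F\<^esub> inv\<^bsub>?F\<^esub> x)" using g SF by auto
        then show "y \<in> ?phi ` ?X" using x g by blast
      qed
    qed
    have "normal_closure G (?phi ` S) = N"
      unfolding normal_closure_def
      using generate_img[OF XF] XY S(4) phiK by (simp add: normal_closure_def)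
    moreover have "?phi ` S \<subseteq> N" using S(2) K by auto
    moreover have "finite (?phi ` S)" using S(3) by simp
    moreover have "enat (card (?phi ` S)) \<le> b" using S(1,3) card_image_le by auto
    ultimately show "\<exists>a\<in>{enat (card S) |S. S \<subseteq> N \<and> finite S \<and> normal_closure G S = N}. a \<le> b"
      by blast
  qed
qed

end
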